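(* (1) For $\eta=n_1\omega_1+\dots+n_r\omega_r\in P^+$, $|\mathcal B^{r-1/2}(\eta)|=\prod_{i=1}^r\left(\binom{2r-1}{i}-\binom{2r-1}{i-2}\right)^{n_i}$. (2) For $\lambda=m_1\omega_1+\dots+m_r\omega_r\in P^+$, $|\mathcal B^{r}(\lambda)|=\prod_{i=1}^r\left(\binom{2r}{i}-\binom{2r}{i-2}\right)^{m_i}$.
   Context: Fix $r\ge1$, $\mathfrak g=\mathfrak{sp}_{2r}$ (matrices with rows/columns indexed $1,\dots,r,-r,\dots,-1$ and $a_{i,j}=-\mathrm{sgn}(i)\mathrm{sgn}(j)a_{-j,-i}$), root vectors $x^-_{i,j-1}=E_{j,i}-E_{-i,-j}$, $x^-_{i,\overline{j}}=E_{-j,i}+E_{-i,j}$ ($1\le i<j\le r$), $x^-_{i,\overline{i}}=E_{-i,i}$; fundamental weights $\omega_i=\varepsilon_1+\dots+\varepsilon_i$, $P^+=\sum\mathbb N\omega_i$; for $\mu=\sum n_i\omega_i$ write $\mu_i=n_i+\dots+n_r$. Binomials $\binom{n}{k}$ with $k<0$ are $0$. For a root vector $x$ and partition $\mathbf s=(\mathbf s(1)\le\dots\le\mathbf s(\ell))\in\mathbb N^\ell$, $\mathbf x(\ell,\mathbf s)=(x\otimes t^{\mathbf s(1)})\cdots(x\otimes t^{\mathbf s(\ell)})\in\mathbf U(\mathfrak g\otimes\mathbb C[t])$ ($=1$ if $\ell=0$); $\mathbf s$ fits into $(\ell,\ell')$ if $\mathbf s(\ell)\le\ell'$. A pattern with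 bounding sequence $\lambda$: integers $\eta^j_i,\lambda^j_i$ ($1\le i\le j\le r$), $\lambda^r_i=\lambda_i$, with $\lambda^j_i\ge\eta^j_i\ge\lambda^j_{i+1}$ ($1\le i\le j\le r$, $\lambda^j_{j+1}=0$) and $\eta^{j+1}_i\ge\lambda^j_i\ge\eta^{j+1}_{i+1}$ ($1\le i\le j<r$). A restricted pattern with bounding sequence $\eta$: integers $\eta^j_i$ ($1\le i\le j\le r$) and $\lambda^j_i$ ($1\le i\le j< r$), $\eta^r_i=\eta_i$, with $\lambda^j_i\ge\eta^j_i\ge\lambda^j_{i+1}$ and $\eta^{j+1}_i\ge\lambda^j_i\ge\eta^{j+1}_{i+1}$ for $1\le i\le j<r$ ($\lambda^j_{j+1}=0$). Differences: $\ell_{i,\overline{j}}=\lambda^j_i-\eta^j_i$, $\ell'_{i,\overline{j}}=\eta^j_i-\lambda^j_{i+1}$, $\ell_{i,j}=\eta^{j+1}_i-\lambda^j_i$, $\ell'_{i,j}=\lambda^j_i-\eta^{j+1}_{i+1}$ (whenever defined). A POP (with bounding sequence $\lambda$) is a pattern plus partitions $\mathbf s_{i,\overline j}$ fitting $(\ell_{i,\overline j},\ell'_{i,\overline j})$ for $1\le i\le j\le r$ and $\mathbf s_{i,j}$ fitting $(\ell_{i,j},\ell'_{i,j})$ for $1\le i\le j<r$; a restricted POP (with bounding sequence $\eta$) is a restricted pattern plus such partitions $\mathbf s_{i,\overline j},\mathbf s_{i,j}$ for $1\le i\le j<r$. Put $X_{\overline j}=\prod_{i=1}^{j}\mathbf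 x^-_{i,\overline j}(\ell_{i,\overline j},\mathbf s_{i,\overline j})$, $X_j=\prod_{i=1}^{j}\mathbf x^-_{i,j}(\ell_{i,j},\mathbf s_{i,j})$ (increasing $i$). $\mathcal B^r(\lambda)$ is the set of elements $X_{\overline1}X_1\cdots X_{\overline{r-1}}X_{r-1}X_{\overline r}$ over POPs with bounding sequence $\lambda$, and $\mathcal B^{r-1/2}(\eta)$ the set of elements $X_{\overline1}X_1\cdots X_{\overline{r-1}}X_{r-1}$ over restricted POPs with bounding sequence $\eta$. *)

theory Defs
  imports Main
begin

text \<open>Labels of the negative root vectors of sp_2r:
  RBar i j  stands for  x^-_{i,bar j}  (1 <= i <= j <= r),
  RPl i j   stands for  x^-_{i,j}      (1 <= i <= j < r), i.e. E_{j+1,i} - E_{-i,-(j+1)}.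
  A letter (x, k) stands for the element x \<otimes> t^k of g \<otimes> C[t].\<close>
datatype root = RBar nat nat | RPl nat nat

type_synonym letter = "root \<times> nat"

text \<open>Bounding sequence of mu = sum n_i omega_i : mu_i = n_i + ... + n_r.\<close>
definition bseq :: "nat \<Rightarrow> (nat \<Rightarrow> nat) \<Rightarrow> nat \<Rightarrow> int" where
  "bseq r n i = (\<Sum>k=i..r. int (n k))"

definition binomz :: "nat \<Rightarrow> int \<Rightarrow> int" where
  "binomz n k = (if k < 0 then 0 else int (n choose nat k))"

text \<open>Patterns: eta j i = eta^j_i, lam j i = lambda^j_i; lambda^j_{j+1} = 0.\<close>
definition lamx :: "(nat \<Rightarrow> nat \<Rightarrow> int) \<Rightarrow> nat \<Rightarrow> nat \<Rightarrow> int" where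
  "lamx lam j k = (if k = j + 1 then 0 else lam j k)"

definition interlace1 :: "nat \<Rightarrow> (nat \<Rightarrow> nat \<Rightarrow> int) \<Rightarrow> (nat \<Rightarrow> nat \<Rightarrow> int) \<Rightarrow> bool" where
  "interlace1 j eta lam \<longleftrightarrow>
     (\<forall>i\<in>{1..j}. lam j i \<ge> eta j i \<and> eta j i \<ge> lamx lam j (i+1))"

definition interlace2 :: "nat \<Rightarrow> (nat \<Rightarrow> nat \<Rightarrow> int) \<Rightarrow> (nat \<Rightarrow> nat \<Rightarrow> int) \<Rightarrow> bool" where
  "interlace2 j eta lam \<longleftrightarrow>
     (\<forall>i\<in>{1..j}. eta (Suc j) i \<ge> lam j i \<and> lam j i \<ge> eta (Suc j) (i+1))"

definition is_pattern ::
  "nat \<Rightarrow> (nat \<Rightarrow> int) \<Rightarrow> (nat \<Rightarrow> nat \<Rightarrow> int) \<Rightarrow> (nat \<Rightarrow> nat \<Rightarrow> int) \<Rightarrow> bool" where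
  "is_pattern r bnd eta lam \<longleftrightarrow>
     (\<forall>i\<in>{1..r}. lam r i = bnd i) \<and>
     (\<forall>j\<in>{1..r}. interlace1 j eta lam) \<and>
     (\<forall>j\<in>{1..<r}. interlace2 j eta lam)"

definition is_rpattern ::
  "nat \<Rightarrow> (nat \<Rightarrow> int) \<Rightarrow> (nat \<Rightarrow> nat \<Rightarrow> int) \<Rightarrow> (nat \<Rightarrow> nat \<Rightarrow> int) \<Rightarrow> bool" where
  "is_rpattern r bnd eta lam \<longleftrightarrow>
     (\<forall>i\<in>{1..r}. eta r i = bnd i) \<and>
     (\<forall>j\<in>{1..<r}. interlace1 j eta lam) \<and>
     (\<forall>j\<in>{1..<r}. interlace2 j eta lam)"

definition lbar :: "_ \<Rightarrow> _ \<Rightarrow> nat \<Rightarrow> nat \<Rightarrow> int" where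
  "lbar eta lam j i = lam j i - eta j i"
definition lbar' :: "_ \<Rightarrow> _ \<Rightarrow> nat \<Rightarrow> nat \<Rightarrow> int" where
  "lbar' eta lam j i = eta j i - lamx lam j (i+1)"
definition lpl :: "_ \<Rightarrow> _ \<Rightarrow> nat \<Rightarrow> nat \<Rightarrow> int" where
  "lpl eta lam j i = eta (Suc j) i - lam j i"
definition lpl' :: "_ \<Rightarrow> _ \<Rightarrow> nat \<Rightarrow> nat \<Rightarrow> int" where
  "lpl' eta lam j i = lam j i - eta (Suc j) (i+1)"

definition fits :: "nat list \<Rightarrow> int \<Rightarrow> int \<Rightarrow> bool" where
  "fits s l l' \<longleftrightarrow> int (length s) = l \<and> sorted s \<and> (\<forall>e\<in>set s. int e \<le> l')"

definition fitsBar where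
  "fitsBar eta lam sb j \<longleftrightarrow> (\<forall>i\<in>{1..j}. fits (sb j i) (lbar eta lam j i) (lbar' eta lam j i))"
definition fitsPl where
  "fitsPl eta lam s j \<longleftrightarrow> (\<forall>i\<in>{1..j}. fits (s j i) (lpl eta lam j i) (lpl' eta lam j i))"

definition is_POP where
  "is_POP r bnd eta lam sb s \<longleftrightarrow> is_pattern r bnd eta lam \<and>
     (\<forall>j\<in>{1..r}. fitsBar eta lam sb j) \<and> (\<forall>j\<in>{1..<r}. fitsPl eta lam s j)"

definition is_rPOP where
  "is_rPOP r bnd eta lam sb s \<longleftrightarrow> is_rpattern r bnd eta lam \<and>
     (\<forall>j\<in>{1..<r}. fitsBar eta lam sb j) \<and> (\<forall>j\<in>{1..<r}. fitsPl eta lam s j)"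

text \<open>The monomials, as formal (ordered) words of letters x \<otimes> t^k.
  x(l,s) = (x\<otimes>t^{s(1)})...(x\<otimes>t^{s(l)}); X_{bar j}, X_j are products over increasing i.\<close>
definition xmon :: "root \<Rightarrow> nat list \<Rightarrow> letter list" where
  "xmon x s = map (\<lambda>k. (x, k)) s"

definition Xbar :: "(nat \<Rightarrow> nat \<Rightarrow> nat list) \<Rightarrow> nat \<Rightarrow> letter list" where
  "Xbar sb j = concat (map (\<lambda>i. xmon (RBar i j) (sb j i)) [1..<Suc j])"

definition Xpl :: "(nat \<Rightarrow> nat \<Rightarrow> nat list) \<Rightarrow> nat \<Rightarrow> letter list" where
  "Xpl s j = concat (map (\<lambda>i. xmon (RPl i j) (s j i)) [1..<Suc j])"

definition wordHalf :: "nat \<Rightarrow> _ \<Rightarrow> _ \<Rightarrow> letter list" where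
  "wordHalf r sb s = concat (map (\<lambda>j. Xbar sb j @ Xpl s j) [1..<r])"

definition wordFull :: "nat \<Rightarrow> _ \<Rightarrow> _ \<Rightarrow> letter list" where
  "wordFull r sb s = wordHalf r sb s @ Xbar sb r"

definition Bfull :: "nat \<Rightarrow> (nat \<Rightarrow> nat) \<Rightarrow> letter list set" where
  "Bfull r m = {wordFull r sb s | eta lam sb s. is_POP r (bseq r m) eta lam sb s}"

definition Bhalf :: "nat \<Rightarrow> (nat \<Rightarrow> nat) \<Rightarrow> letter list set" where
  "Bhalf r n = {wordHalf r sb s | eta lam sb s. is_rPOP r (bseq r n) eta lam sb s}"

end

theory Submission
  imports Defs "HOL-Library.FuncSet" "HOL-Library.Multiset"
begin


definition SL :: "nat \<Rightarrow> nat \<Rightarrow> nat list set" where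
  "SL k m = {x. sorted x \<and> length x = k \<and> (\<forall>e\<in>set x. e \<le> m)}"

lemma card_SL: "card (SL k m) = (m + k) choose k"
proof -
  have "bij_betw mset (SL k m) (multisets_of_size {0..m} k)"
  proof (rule bij_betw_byWitness[where f' = sorted_list_of_multiset])
    show "\<forall>a\<in>SL k m. sorted_list_of_multiset (mset a) = a"
      by (auto simp: SL_def sorted_sort_id)
    show "\<forall>a'\<in>multisets_of_size {0..m} k. mset (sorted_list_of_multiset a') = a'" by simp
    show "mset ` SL k m \<subseteq> multisets_of_size {0..m} k"
      by (auto simp: SL_def multisets_of_size_def)
    show "sorted_list_of_multiset ` multisets_of_size {0..m} k \<subseteq> SL k m"
      by (auto simp: SL_def multisets_of_size_def)
         (metis mset_sorted_list_of_multiset size_mset)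
  qed
  then have "card (SL k m) = card (multisets_of_size {0..m} k)" by (rule bij_betw_same_card)
  also have "\<dots> = (m + k) choose k" by (simp add: card_multisets_of_size)
  finally show ?thesis .
qed



definition PB :: "nat \<Rightarrow> nat list set" where
  "PB d = {x. sorted x \<and> length x \<le> d \<and> (\<forall>e\<in>set x. e \<le> d - length x)}"

lemma finite_PB: "finite (PB d)"
proof (rule finite_subset)
  show "PB d \<subseteq> {xs. set xs \<subseteq> {0..d} \<and> length xs \<le> d}" by (auto simp: PB_def)
  show "finite {xs. set xs \<subseteq> {0..d} \<and> length xs \<le> d}" by (rule finite_lists_length_le) simp
qed

lemma finite_SL: "finite (SL k m)"
proof (rule finite_subset)
  show "SL k m \<subseteq> {xs. set xs \<subseteq> {0..m} \<and> length xs \<le> k}" by (auto simp: SL_def)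
  show "finite {xs. set xs \<subseteq> {0..m} \<and> length xs \<le> k}" by (rule finite_lists_length_le) simp
qed

lemma PB_UN: "PB d = (\<Union>k\<in>{0..d}. SL k (d - k))"
  by (auto simp: PB_def SL_def)

lemma sum_PB:
  fixes g :: "nat \<Rightarrow> 'a::comm_ring_1"
  shows "(\<Sum>x\<in>PB d. g (length x)) = (\<Sum>k=0..d. of_nat (d choose k) * g k)"
proof -
  have "(\<Sum>x\<in>PB d. g (length x)) = (\<Sum>k=0..d. \<Sum>x\<in>SL k (d - k). g (length x))"
    unfolding PB_UN
    apply (rule sum.UNION_disjoint)
      apply simp
     apply (simp add: finite_SL)
    apply (auto simp: SL_def)
    done
  also have "\<dots> = (\<Sum>k=0..d. \<Sum>x\<in>SL k (d - k). g k)"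
    by (intro sum.cong refl) (auto simp: SL_def)
  also have "\<dots> = (\<Sum>k=0..d. of_nat (d choose k) * g k)"
    by (intro sum.cong refl) (simp add: card_SL)
  finally show ?thesis .
qed

lemma key_factor:
  fixes a b :: "'a::comm_ring_1"
  shows "(\<Sum>x\<in>PB d. b ^ (d - length x) * a ^ length x) = (b + a) ^ d"
proof -
  have "(\<Sum>x\<in>PB d. b ^ (d - length x) * a ^ length x) = (\<Sum>k=0..d. of_nat (d choose k) * (b ^ (d - k) * a ^ k))"
    by (rule sum_PB)
  also have "\<dots> = (a + b) ^ d"
    by (simp add: binomial_ring atLeast0AtMost mult_ac)
  finally show ?thesis by (simp add: add.commute)
qed

lemma key_sum:
  fixes F :: "nat \<Rightarrow> 'a::comm_ring_1"
  shows "(\<Sum>p\<in>PiE {1..j} (\<lambda>i. PB (D i)). \<Prod>i=1..j. F i ^ (D i - length (p i)) * F (i-1) ^ length (p i))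
        = (\<Prod>i=1..j. (F i + F (i-1)) ^ D i)"
proof -
  have "(\<Prod>i=1..j. (F i + F (i-1)) ^ D i) = (\<Prod>i=1..j. \<Sum>x\<in>PB (D i). F i ^ (D i - length x) * F (i-1) ^ length x)"
    by (simp add: key_factor)
  also have "\<dots> = (\<Sum>p\<in>PiE {1..j} (\<lambda>i. PB (D i)). \<Prod>i=1..j. F i ^ (D i - length (p i)) * F (i-1) ^ length (p i))"
    by (rule prod_sum_PiE) (auto simp: finite_PB)
  finally show ?thesis by simp
qed

lemma prod_shift:
  fixes f :: "nat \<Rightarrow> 'a::comm_ring_1"
  shows "(\<Prod>i=1..j. f (i - 1) ^ k i) * f j ^ k (Suc j) = f 0 ^ k 1 * (\<Prod>i=1..j. f i ^ k (Suc i))"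
proof (induction j)
  case 0 then show ?case by simp
next
  case (Suc j)
  have "(\<Prod>i=1..Suc j. f (i - 1) ^ k i) * f (Suc j) ^ k (Suc (Suc j))
      = ((\<Prod>i=1..j. f (i - 1) ^ k i) * f j ^ k (Suc j)) * f (Suc j) ^ k (Suc (Suc j))"
    by (simp add: prod.cl_ivl_Suc mult_ac)
  also have "\<dots> = (f 0 ^ k 1 * (\<Prod>i=1..j. f i ^ k (Suc i))) * f (Suc j) ^ k (Suc (Suc j))"
    by (simp only: Suc.IH)
  also have "\<dots> = f 0 ^ k 1 * (\<Prod>i=1..Suc j. f i ^ k (Suc i))"
    by (simp add: mult_ac)
  finally show ?case .
qed

lemma prod_pow_shift:
  fixes F :: "nat \<Rightarrow> 'a::comm_ring_1"
  assumes "F 0 = 1" and "\<And>i. i \<in> {1..j} \<Longrightarrow> E i = (D i - k i) + k (Suc i)"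
  shows "(\<Prod>i=1..j. F i ^ E i) = (\<Prod>i=1..j. F i ^ (D i - k i) * F (i-1) ^ k i) * F j ^ k (Suc j)"
proof -
  have "(\<Prod>i=1..j. F i ^ E i) = (\<Prod>i=1..j. F i ^ (D i - k i) * F i ^ k (Suc i))"
    by (intro prod.cong refl) (simp add: assms(2) power_add)
  also have "\<dots> = (\<Prod>i=1..j. F i ^ (D i - k i)) * (\<Prod>i=1..j. F i ^ k (Suc i))"
    by (rule prod.distrib)
  also have "(\<Prod>i=1..j. F i ^ k (Suc i)) = (\<Prod>i=1..j. F (i - 1) ^ k i) * F j ^ k (Suc j)"
    using prod_shift[where f=F and j=j and k=k] assms(1) by simp
  finally show ?thesis by (simp add: prod.distrib mult_ac)
qed



fun lv :: "root \<Rightarrow> nat" where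
  "lv (RBar i j) = 2 * j"
| "lv (RPl i j) = 2 * j + 1"

lemma lv_Xbar: "c \<in> set (Xbar sb j) \<Longrightarrow> lv (fst c) = 2 * j"
  by (auto simp: Xbar_def xmon_def)

lemma lv_Xpl: "c \<in> set (Xpl s j) \<Longrightarrow> lv (fst c) = 2 * j + 1"
  by (auto simp: Xpl_def xmon_def)

lemma lv_wordHalf: "c \<in> set (wordHalf j sb s) \<Longrightarrow> lv (fst c) < 2 * j"
  by (auto simp: wordHalf_def dest!: lv_Xbar lv_Xpl)

lemma wordHalf_Suc: "wordHalf (Suc j) sb s = wordHalf j sb s @ Xbar sb j @ Xpl s j"
proof (cases j)
  case 0 then show ?thesis by (simp add: wordHalf_def Xbar_def Xpl_def)
next
  case (Suc k) then show ?thesis by (simp add: wordHalf_def)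
qed

lemma wordHalf_cong:
  assumes "\<And>j'. j' < j \<Longrightarrow> sb' j' = sb j'" "\<And>j'. j' < j \<Longrightarrow> s' j' = s j'"
  shows "wordHalf j sb' s' = wordHalf j sb s"
  unfolding wordHalf_def Xbar_def Xpl_def
  by (intro arg_cong[where f=concat] map_cong refl) (simp add: assms)

lemma Xbar_cong: "(\<And>i. i \<in> {1..j} \<Longrightarrow> sb' j i = sb j i) \<Longrightarrow> Xbar sb' j = Xbar sb j"
  unfolding Xbar_def by (intro arg_cong[where f=concat] map_cong refl) auto

lemma Xpl_cong: "(\<And>i. i \<in> {1..j} \<Longrightarrow> s' j i = s j i) \<Longrightarrow> Xpl s' j = Xpl s j"
  unfolding Xpl_def by (intro arg_cong[where f=concat] map_cong refl) auto

lemma concat_single: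
  "distinct xs \<Longrightarrow> i \<in> set xs \<Longrightarrow> concat (map (\<lambda>i'. if i' = i then X else []) xs) = X"
proof (induction xs)
  case Nil then show ?case by simp
next
  case (Cons a xs)
  show ?case
  proof (cases "a = i")
    case True
    with Cons.prems have "\<forall>i'\<in>set xs. i' \<noteq> i" by auto
    then have "concat (map (\<lambda>i'. if i' = i then X else []) xs) = []" by simp
    with True show ?thesis by simp
  next
    case False with Cons show ?thesis by simp
  qed
qed

lemma filter_xmon: "filter (\<lambda>c. fst c = x) (xmon y l) = (if y = x then xmon x l else [])"
  by (induction l) (auto simp: xmon_def)

lemma snd_xmon: "map snd (xmon x l) = l"
  by (induction l) (auto simp: xmon_def)

lemma extract_bar:
  assumes "\<forall>c\<in>set w. lv (fst c) < 2 * j" "i \<in> {1..j}"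
  shows "map snd (filter (\<lambda>c. fst c = RBar i j) (w @ Xbar sb j)) = sb j i"
proof -
  have "filter (\<lambda>c. fst c = RBar i j) w = []"
    using assms(1) by (auto simp: filter_empty_conv)
  moreover have "filter (\<lambda>c. fst c = RBar i j) (Xbar sb j) = xmon (RBar i j) (sb j i)"
  proof -
    have "map (\<lambda>i'. filter (\<lambda>c. fst c = RBar i j) (xmon (RBar i' j) (sb j i'))) [1..<Suc j]
        = map (\<lambda>i'. if i' = i then xmon (RBar i j) (sb j i) else []) [1..<Suc j]"
      by (intro map_cong refl) (auto simp: filter_xmon)
    moreover have "concat (map (\<lambda>i'. if i' = i then xmon (RBar i j) (sb j i) else []) [1..<Suc j])
        = xmon (RBar i j) (sb j i)"
      using assms(2) by (intro concat_single) auto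
    ultimately show ?thesis
      unfolding Xbar_def filter_concat map_map comp_def by (simp only:)
  qed
  ultimately show ?thesis by (simp add: snd_xmon)
qed

lemma extract_pl:
  assumes "\<forall>c\<in>set w. lv (fst c) \<le> 2 * j" "i \<in> {1..j}"
  shows "map snd (filter (\<lambda>c. fst c = RPl i j) (w @ Xpl s j)) = s j i"
proof -
  have "filter (\<lambda>c. fst c = RPl i j) w = []"
    using assms(1) by (auto simp: filter_empty_conv)
  moreover have "filter (\<lambda>c. fst c = RPl i j) (Xpl s j) = xmon (RPl i j) (s j i)"
  proof -
    have "map (\<lambda>i'. filter (\<lambda>c. fst c = RPl i j) (xmon (RPl i' j) (s j i'))) [1..<Suc j]
        = map (\<lambda>i'. if i' = i then xmon (RPl i j) (s j i) else []) [1..<Suc j]"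
      by (intro map_cong refl) (auto simp: filter_xmon)
    moreover have "concat (map (\<lambda>i'. if i' = i then xmon (RPl i j) (s j i) else []) [1..<Suc j])
        = xmon (RPl i j) (s j i)"
      using assms(2) by (intro concat_single) auto
    ultimately show ?thesis
      unfolding Xpl_def filter_concat map_map comp_def by (simp only:)
  qed
  ultimately show ?thesis by (simp add: snd_xmon)
qed

lemma card_UN_app:
  fixes P :: "'p set" and W :: "'p \<Rightarrow> 'a list set" and seg :: "'p \<Rightarrow> 'a list"
  assumes "finite P" "\<And>p. p \<in> P \<Longrightarrow> finite (W p)"
    and inj: "\<And>p p' w w'. p \<in> P \<Longrightarrow> p' \<in> P \<Longrightarrow> w \<in> W p \<Longrightarrow> w' \<in> W p' \<Longrightarrow>
              w @ seg p = w' @ seg p' \<Longrightarrow> p = p'"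
  shows "finite (\<Union>p\<in>P. (\<lambda>w. w @ seg p) ` W p) \<and>
         card (\<Union>p\<in>P. (\<lambda>w. w @ seg p) ` W p) = (\<Sum>p\<in>P. card (W p))"
proof
  show "finite (\<Union>p\<in>P. (\<lambda>w. w @ seg p) ` W p)" using assms(1,2) by auto
  have "card (\<Union>p\<in>P. (\<lambda>w. w @ seg p) ` W p) = (\<Sum>p\<in>P. card ((\<lambda>w. w @ seg p) ` W p))"
    using assms(1,2) by (intro card_UN_disjoint) (auto dest: inj)
  also have "\<dots> = (\<Sum>p\<in>P. card (W p))"
    by (intro sum.cong refl card_image) (auto simp: inj_on_def)
  finally show "card (\<Union>p\<in>P. (\<lambda>w. w @ seg p) ` W p) = (\<Sum>p\<in>P. card (W p))" .
qed



definition lx :: "nat \<Rightarrow> (nat \<Rightarrow> int) \<Rightarrow> nat \<Rightarrow> int" where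
  "lx n f k = (if k = n + 1 then 0 else f k)"
definition dec :: "nat \<Rightarrow> (nat \<Rightarrow> int) \<Rightarrow> bool" where
  "dec n f \<longleftrightarrow> (\<forall>i\<in>{1..n}. f i \<ge> lx n f (i+1))"
definition dd :: "nat \<Rightarrow> (nat \<Rightarrow> int) \<Rightarrow> nat \<Rightarrow> nat" where
  "dd n f i = nat (f i - lx n f (i+1))"

definition barOK :: "nat \<Rightarrow> (nat \<Rightarrow> int) \<Rightarrow> (nat \<Rightarrow> int) \<Rightarrow> (nat \<Rightarrow> nat list) \<Rightarrow> bool" where
  "barOK j L E P \<longleftrightarrow> (\<forall>i\<in>{1..j}. L i \<ge> E i \<and> E i \<ge> lx j L (i+1) \<and> fits (P i) (L i - E i) (E i - lx j L (i+1)))"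
definition plOK :: "nat \<Rightarrow> (nat \<Rightarrow> int) \<Rightarrow> (nat \<Rightarrow> int) \<Rightarrow> (nat \<Rightarrow> nat list) \<Rightarrow> bool" where
  "plOK j E L Q \<longleftrightarrow> (\<forall>i\<in>{1..j}. E i \<ge> L i \<and> L i \<ge> E (i+1) \<and> fits (Q i) (E i - L i) (L i - E (i+1)))"

lemma barOK_iff: "(interlace1 j eta lam \<and> fitsBar eta lam sb j) \<longleftrightarrow> barOK j (lam j) (eta j) (sb j)"
  by (auto simp: interlace1_def fitsBar_def barOK_def lbar_def lbar'_def lamx_def lx_def)

lemma plOK_iff: "(interlace2 j eta lam \<and> fitsPl eta lam s j) \<longleftrightarrow> plOK j (eta (Suc j)) (lam j) (s j)"
  by (auto simp: interlace2_def fitsPl_def plOK_def lpl_def lpl'_def)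

lemma barOK_cong:
  assumes "\<And>i. i \<in> {1..j} \<Longrightarrow> L i = L' i" "\<And>i. i \<in> {1..j} \<Longrightarrow> E i = E' i" "\<And>i. i \<in> {1..j} \<Longrightarrow> P i = P' i"
  shows "barOK j L E P = barOK j L' E' P'"
proof -
  have "\<And>i. i \<in> {1..j} \<Longrightarrow> lx j L (i+1) = lx j L' (i+1)"
    using assms(1) by (auto simp: lx_def)
  then show ?thesis using assms unfolding barOK_def by auto
qed

lemma plOK_cong:
  assumes "\<And>i. i \<in> {1..Suc j} \<Longrightarrow> E i = E' i" "\<And>i. i \<in> {1..j} \<Longrightarrow> L i = L' i" "\<And>i. i \<in> {1..j} \<Longrightarrow> Q i = Q' i"
  shows "plOK j E L Q = plOK j E' L' Q'"
  using assms unfolding plOK_def by auto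

lemma core:
  "(a \<ge> E \<and> E \<ge> c \<and> fits P (a - E) (E - c)) \<longleftrightarrow>
   (c \<le> a \<and> P \<in> PB (nat (a - c)) \<and> E = a - int (length P))"
proof
  assume h: "a \<ge> E \<and> E \<ge> c \<and> fits P (a - E) (E - c)"
  then have l: "int (length P) = a - E" and s: "sorted P" and e: "\<forall>x\<in>set P. int x \<le> E - c"
    by (auto simp: fits_def)
  have "length P \<le> nat (a - c)" using l h by linarith
  moreover have "\<forall>x\<in>set P. x \<le> nat (a - c) - length P"
  proof
    fix x assume "x \<in> set P"
    with e have "int x \<le> E - c" by auto
    then show "x \<le> nat (a - c) - length P" using l h by linarith
  qed
  ultimately show "c \<le> a \<and> P \<in> PB (nat (a - c)) \<and> E = a - int (length P)"
    using h l s by (auto simp: PB_def)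
next
  assume h: "c \<le> a \<and> P \<in> PB (nat (a - c)) \<and> E = a - int (length P)"
  then have s: "sorted P" and l: "length P \<le> nat (a - c)" and e: "\<forall>x\<in>set P. x \<le> nat (a - c) - length P"
    by (auto simp: PB_def)
  have "\<forall>x\<in>set P. int x \<le> E - c"
  proof
    fix x assume "x \<in> set P"
    with e have "x \<le> nat (a - c) - length P" by auto
    then show "int x \<le> E - c" using l h by linarith
  qed
  then show "a \<ge> E \<and> E \<ge> c \<and> fits P (a - E) (E - c)"
    using h l s by (auto simp: fits_def)
qed

lemma barOK_PB: "barOK j L E P \<Longrightarrow> i \<in> {1..j} \<Longrightarrow> P i \<in> PB (dd j L i) \<and> E i = L i - int (length (P i))"
  unfolding barOK_def dd_def using core by blast

lemma PB_barOK:
  assumes "dec j L" "\<And>i. i \<in> {1..j} \<Longrightarrow> P i \<in> PB (dd j L i)" "\<And>i. i \<in> {1..j} \<Longrightarrow> E i = L i - int (length (P i))"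
  shows "barOK j L E P"
  unfolding barOK_def
proof
  fix i assume i: "i \<in> {1..j}"
  have 1: "lx j L (i+1) \<le> L i" using assms(1) i unfolding dec_def by blast
  have 2: "P i \<in> PB (nat (L i - lx j L (i+1)))" using assms(2)[OF i] by (simp add: dd_def)
  have 3: "E i = L i - int (length (P i))" using assms(3)[OF i] .
  show "L i \<ge> E i \<and> E i \<ge> lx j L (i+1) \<and> fits (P i) (L i - E i) (E i - lx j L (i+1))"
    using core[where a="L i" and E="E i" and c="lx j L (i+1)" and P="P i"] 1 2 3 by blast
qed

lemma dd_Suc: "i \<in> {1..j} \<Longrightarrow> dd (Suc j) E i = nat (E i - E (i+1))"
  by (auto simp: dd_def lx_def)

lemma plOK_PB: "plOK j E L Q \<Longrightarrow> i \<in> {1..j} \<Longrightarrow> Q i \<in> PB (dd (Suc j) E i) \<and> L i = E i - int (length (Q i))"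
  unfolding plOK_def dd_Suc using core by (metis dd_Suc)

lemma PB_plOK:
  assumes "dec (Suc j) E" "\<And>i. i \<in> {1..j} \<Longrightarrow> Q i \<in> PB (dd (Suc j) E i)" "\<And>i. i \<in> {1..j} \<Longrightarrow> L i = E i - int (length (Q i))"
  shows "plOK j E L Q"
  unfolding plOK_def
proof
  fix i assume i: "i \<in> {1..j}"
  have 0: "lx (Suc j) E (i+1) \<le> E i" using assms(1) i unfolding dec_def by auto
  have 1: "E (i+1) \<le> E i" using 0 i by (simp add: lx_def)
  have 2: "Q i \<in> PB (nat (E i - E (i+1)))" using assms(2)[OF i] dd_Suc[OF i] by simp
  have 3: "L i = E i - int (length (Q i))" using assms(3)[OF i] .
  show "E i \<ge> L i \<and> L i \<ge> E (i+1) \<and> fits (Q i) (E i - L i) (L i - E (i+1))"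
    using core[where a="E i" and E="L i" and c="E (i+1)" and P="Q i"] 1 2 3 by blast
qed



definition validA where
 "validA j lm eta lam sb s \<longleftrightarrow> (\<forall>i\<in>{1..j}. lam j i = lm i) \<and>
   (\<forall>j'\<in>{1..j}. barOK j' (lam j') (eta j') (sb j')) \<and>
   (\<forall>j'\<in>{1..<j}. plOK j' (eta (Suc j')) (lam j') (s j'))"
definition WA :: "nat \<Rightarrow> (nat \<Rightarrow> int) \<Rightarrow> letter list set" where
 "WA j lm = {wordHalf j sb s @ Xbar sb j | eta lam sb s. validA j lm eta lam sb s}"
definition validB where
 "validB j et eta lam sb s \<longleftrightarrow> (\<forall>i\<in>{1..Suc j}. eta (Suc j) i = et i) \<and>
   (\<forall>j'\<in>{1..j}. barOK j' (lam j') (eta j') (sb j') \<and> plOK j' (eta (Suc j')) (lam j') (s j'))"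
definition WB :: "nat \<Rightarrow> (nat \<Rightarrow> int) \<Rightarrow> letter list set" where
 "WB j et = {wordHalf (Suc j) sb s | eta lam sb s. validB j et eta lam sb s}"

lemma recA:
  assumes j: "j \<ge> 1" and dec: "dec j lm"
  shows "WA j lm = (\<Union>p\<in>PiE {1..j} (\<lambda>i. PB (dd j lm i)).
           (\<lambda>w. w @ Xbar (\<lambda>_. p) j) ` WB (j - 1) (\<lambda>i. lm i - int (length (p i))))"
proof (intro equalityI subsetI)
  have jj: "Suc (j - 1) = j" using j by simp
  fix x assume "x \<in> WA j lm"
  then obtain eta lam sb s where x: "x = wordHalf j sb s @ Xbar sb j" and v: "validA j lm eta lam sb s"
    by (auto simp: WA_def)
  define p where "p = restrict (sb j) {1..j}"
  have top: "barOK j (lam j) (eta j) (sb j)" using v j by (auto simp: validA_def)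
  have top': "barOK j lm (eta j) (sb j)"
    using top v by (subst barOK_cong[where L'="lam j" and E'="eta j" and P'="sb j"]) (auto simp: validA_def)
  have pP: "p \<in> PiE {1..j} (\<lambda>i. PB (dd j lm i))"
    unfolding p_def using barOK_PB[OF top'] by (auto simp: restrict_PiE_iff)
  have eq: "\<forall>i\<in>{1..j}. eta j i = lm i - int (length (p i))"
    using barOK_PB[OF top'] by (auto simp: p_def)
  have "validB (j - 1) (\<lambda>i. lm i - int (length (p i))) eta lam sb s"
    unfolding validB_def jj using eq v by (auto simp: validA_def)
  then have "wordHalf j sb s \<in> WB (j - 1) (\<lambda>i. lm i - int (length (p i)))"
    unfolding WB_def jj by blast
  moreover have "Xbar sb j = Xbar (\<lambda>_. p) j" by (rule Xbar_cong) (simp add: p_def)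
  ultimately show "x \<in> (\<Union>p\<in>PiE {1..j} (\<lambda>i. PB (dd j lm i)).
           (\<lambda>w. w @ Xbar (\<lambda>_. p) j) ` WB (j - 1) (\<lambda>i. lm i - int (length (p i))))"
    using pP x by blast
next
  have jj: "Suc (j - 1) = j" using j by simp
  fix x assume "x \<in> (\<Union>p\<in>PiE {1..j} (\<lambda>i. PB (dd j lm i)).
           (\<lambda>w. w @ Xbar (\<lambda>_. p) j) ` WB (j - 1) (\<lambda>i. lm i - int (length (p i))))"
  then obtain p w where pP: "p \<in> PiE {1..j} (\<lambda>i. PB (dd j lm i))"
    and w: "w \<in> WB (j - 1) (\<lambda>i. lm i - int (length (p i)))" and x: "x = w @ Xbar (\<lambda>_. p) j"
    by blast
  from w obtain eta lam sb s where w': "w = wordHalf j sb s"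
    and v: "validB (j - 1) (\<lambda>i. lm i - int (length (p i))) eta lam sb s"
    unfolding WB_def jj by blast
  define lam' where "lam' = lam(j := lm)"
  define sb' where "sb' = sb(j := p)"
  have "wordHalf j sb' s = wordHalf j sb s"
    by (rule wordHalf_cong) (auto simp: sb'_def)
  moreover have "Xbar sb' j = Xbar (\<lambda>_. p) j" by (rule Xbar_cong) (simp add: sb'_def)
  ultimately have x': "x = wordHalf j sb' s @ Xbar sb' j" using x w' by simp
  have eq: "\<forall>i\<in>{1..j}. eta j i = lm i - int (length (p i))" using v jj by (auto simp: validB_def)
  have topok: "barOK j lm (eta j) p"
    by (rule PB_barOK[OF dec]) (use pP eq in auto)
  have "validA j lm eta lam' sb' s"
    unfolding validA_def
  proof (intro conjI ballI)
    fix i assume "i \<in> {1..j}" then show "lam' j i = lm i" by (simp add: lam'_def)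
  next
    fix j' assume j': "j' \<in> {1..j}"
    show "barOK j' (lam' j') (eta j') (sb' j')"
    proof (cases "j' = j")
      case True then show ?thesis using topok by (simp add: lam'_def sb'_def)
    next
      case False
      then have "j' \<in> {1..j-1}" using j' by auto
      then show ?thesis using v False by (auto simp: validB_def lam'_def sb'_def)
    qed
  next
    fix j' assume j': "j' \<in> {1..<j}"
    then have "j' \<in> {1..j-1}" "j' \<noteq> j" by auto
    then show "plOK j' (eta (Suc j')) (lam' j') (s j')"
      using v by (auto simp: validB_def lam'_def)
  qed
  then show "x \<in> WA j lm" unfolding WA_def using x' by blast
qed

lemma recB:
  assumes j: "j \<ge> 1" and dec: "dec (Suc j) et"
  shows "WB j et = (\<Union>q\<in>PiE {1..j} (\<lambda>i. PB (dd (Suc j) et i)).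
           (\<lambda>w. w @ Xpl (\<lambda>_. q) j) ` WA j (\<lambda>i. et i - int (length (q i))))"
proof (intro equalityI subsetI)
  fix x assume "x \<in> WB j et"
  then obtain eta lam sb s where x: "x = wordHalf (Suc j) sb s" and v: "validB j et eta lam sb s"
    by (auto simp: WB_def)
  define q where "q = restrict (s j) {1..j}"
  have top: "plOK j (eta (Suc j)) (lam j) (s j)" using v j by (auto simp: validB_def)
  have top': "plOK j et (lam j) (s j)"
    using top v by (subst plOK_cong[where E'="eta (Suc j)" and L'="lam j" and Q'="s j"]) (auto simp: validB_def)
  have qP: "q \<in> PiE {1..j} (\<lambda>i. PB (dd (Suc j) et i))"
    unfolding q_def using plOK_PB[OF top'] by (auto simp: restrict_PiE_iff)
  have eq: "\<forall>i\<in>{1..j}. lam j i = et i - int (length (q i))"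
    using plOK_PB[OF top'] by (auto simp: q_def)
  have "validA j (\<lambda>i. et i - int (length (q i))) eta lam sb s"
    unfolding validA_def using eq v by (auto simp: validB_def)
  then have "wordHalf j sb s @ Xbar sb j \<in> WA j (\<lambda>i. et i - int (length (q i)))"
    unfolding WA_def by blast
  moreover have "Xpl s j = Xpl (\<lambda>_. q) j" by (rule Xpl_cong) (simp add: q_def)
  moreover have "x = (wordHalf j sb s @ Xbar sb j) @ Xpl s j" using x by (simp add: wordHalf_Suc)
  ultimately show "x \<in> (\<Union>q\<in>PiE {1..j} (\<lambda>i. PB (dd (Suc j) et i)).
           (\<lambda>w. w @ Xpl (\<lambda>_. q) j) ` WA j (\<lambda>i. et i - int (length (q i))))"
    using qP by blast
next
  fix x assume "x \<in> (\<Union>q\<in>PiE {1..j} (\<lambda>i. PB (dd (Suc j) et i)).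
           (\<lambda>w. w @ Xpl (\<lambda>_. q) j) ` WA j (\<lambda>i. et i - int (length (q i))))"
  then obtain q w where qP: "q \<in> PiE {1..j} (\<lambda>i. PB (dd (Suc j) et i))"
    and w: "w \<in> WA j (\<lambda>i. et i - int (length (q i)))" and x: "x = w @ Xpl (\<lambda>_. q) j"
    by blast
  from w obtain eta lam sb s where w': "w = wordHalf j sb s @ Xbar sb j"
    and v: "validA j (\<lambda>i. et i - int (length (q i))) eta lam sb s"
    unfolding WA_def by blast
  define eta' where "eta' = eta(Suc j := et)"
  define s' where "s' = s(j := q)"
  have "wordHalf j sb s' = wordHalf j sb s"
    by (rule wordHalf_cong) (auto simp: s'_def)
  moreover have "Xpl s' j = Xpl (\<lambda>_. q) j" by (rule Xpl_cong) (simp add: s'_def)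
  ultimately have x': "x = wordHalf (Suc j) sb s'" using x w' by (simp add: wordHalf_Suc)
  have eq: "\<forall>i\<in>{1..j}. lam j i = et i - int (length (q i))" using v by (auto simp: validA_def)
  have topok: "plOK j et (lam j) q"
    by (rule PB_plOK[OF dec]) (use qP eq in auto)
  have "validB j et eta' lam sb s'"
    unfolding validB_def
  proof (intro conjI ballI)
    fix i assume "i \<in> {1..Suc j}" then show "eta' (Suc j) i = et i" by (simp add: eta'_def)
  next
    fix j' assume j': "j' \<in> {1..j}"
    then have "j' \<noteq> Suc j" by auto
    then show "barOK j' (lam j') (eta' j') (sb j')" using v j' by (auto simp: validA_def eta'_def)
  next
    fix j' assume j': "j' \<in> {1..j}"
    show "plOK j' (eta' (Suc j')) (lam j') (s' j')"
    proof (cases "j' = j")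
      case True then show ?thesis using topok by (simp add: eta'_def s'_def)
    next
      case False
      then have "j' \<in> {1..<j}" using j' by auto
      then show ?thesis using v False by (auto simp: validA_def eta'_def s'_def)
    qed
  qed
  then show "x \<in> WB j et" unfolding WB_def using x' by blast
qed



lemma WA_lv: "w \<in> WA j lm \<Longrightarrow> c \<in> set w \<Longrightarrow> lv (fst c) \<le> 2 * j"
  by (auto simp: WA_def dest!: lv_wordHalf lv_Xbar)

lemma WB_lv: "w \<in> WB j et \<Longrightarrow> c \<in> set w \<Longrightarrow> lv (fst c) < 2 * Suc j"
  unfolding WB_def by (auto dest!: lv_wordHalf)

lemma WB0: "WB 0 et = {[]}"
proof -
  have v: "validB 0 et (\<lambda>_. et) (\<lambda>_. et) (\<lambda>_ _. []) (\<lambda>_ _. [])" by (simp add: validB_def)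
  have wh: "wordHalf (Suc 0) sb s = []" for sb s by (simp add: wordHalf_def)
  show ?thesis
  proof (intro equalityI subsetI)
    fix x assume "x \<in> WB 0 et" then show "x \<in> {[]}" using wh unfolding WB_def by auto
  next
    fix x :: "letter list" assume "x \<in> {[]}"
    then have "x = wordHalf (Suc 0) (\<lambda>_ _. []) (\<lambda>_ _. [])" using wh by simp
    then show "x \<in> WB 0 et" using v unfolding WB_def by blast
  qed
qed

definition Aj :: "nat \<Rightarrow> nat \<Rightarrow> int" where
  "Aj j i = binomz (2*j) (int i) - binomz (2*j) (int i - 2)"
definition Bj :: "nat \<Rightarrow> nat \<Rightarrow> int" where
  "Bj j i = binomz (2*j+1) (int i) - binomz (2*j+1) (int i - 2)"

lemma binomz_pascal: "binomz (Suc n) k = binomz n k + binomz n (k - 1)"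
proof (cases "k \<le> 0")
  case True
  then show ?thesis by (cases "k = 0") (auto simp: binomz_def)
next
  case False
  then have "nat k = Suc (nat (k - 1))" by simp
  then show ?thesis using False by (simp add: binomz_def)
qed

lemma Aj0: "Aj j 0 = 1" by (simp add: Aj_def binomz_def)
lemma Bj0: "Bj j 0 = 1" by (simp add: Bj_def binomz_def)

lemma A_from_B: "j \<ge> 1 \<Longrightarrow> i \<ge> 1 \<Longrightarrow> Aj j i = Bj (j-1) i + Bj (j-1) (i-1)"
proof -
  assume j: "j \<ge> 1" and i: "i \<ge> 1"
  have n: "2*j = Suc (2*(j-1)+1)" using j by simp
  have ii: "int (i - 1) = int i - 1" using i by simp
  show ?thesis unfolding Aj_def Bj_def n binomz_pascal ii by (simp add: algebra_simps)
qed

lemma B_from_A: "i \<ge> 1 \<Longrightarrow> Bj j i = Aj j i + Aj j (i-1)"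
proof -
  assume i: "i \<ge> 1"
  have ii: "int (i - 1) = int i - 1" using i by simp
  show ?thesis unfolding Aj_def Bj_def ii by (simp add: binomz_pascal algebra_simps)
qed

lemma Aj_over: "Aj j (Suc j) = 0"
proof (cases "j = 0")
  case True then show ?thesis by (simp add: Aj_def binomz_def)
next
  case False
  have "(2*j) choose (j - 1) = (2*j) choose (2*j - (j - 1))"
    by (rule binomial_symmetric) simp
  moreover have "2*j - (j - 1) = Suc j" using False by simp
  moreover have "nat (int (Suc j) - 2) = j - 1" using False by simp
  moreover have "nat (int (Suc j)) = Suc j" by simp
  ultimately show ?thesis unfolding Aj_def binomz_def by (simp del: of_nat_Suc)
qed

lemma B_top: "Bj j (Suc j) = Aj j j"
  using B_from_A[of "Suc j" j] Aj_over by simp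



lemma natarith: "b \<le> a \<Longrightarrow> L \<le> nat (a - b) \<Longrightarrow> nat (a - int L - (b - int L')) = nat (a - b) - L + L'"
  by linarith
lemma natarith2: "L \<le> nat (a - b) \<Longrightarrow> nat (a - int L - b) = nat (a - b) - L"
  by linarith
lemma natarith3: "0 \<le> b \<Longrightarrow> b \<le> a \<Longrightarrow> L \<le> nat (a - b) \<Longrightarrow> nat (a - int L - 0) = nat (a - b) - L + nat (b - 0)"
  by linarith

lemma PiE_len: "p \<in> PiE {1..j} (\<lambda>i. PB (D i)) \<Longrightarrow> i \<in> {1..j} \<Longrightarrow> length (p i) \<le> D i"
  by (auto simp: PB_def)

lemma dec_at: "dec n f \<Longrightarrow> i \<in> {1..n} \<Longrightarrow> lx n f (i+1) \<le> f i"
  unfolding dec_def by blast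

lemma dd_shiftA:
  assumes dec: "dec j lm" and pP: "p \<in> PiE {1..j} (\<lambda>i. PB (dd j lm i))" and i: "i \<in> {1..j}"
  shows "dd j (\<lambda>i. lm i - int (length (p i))) i = (dd j lm i - length (p i)) + (if Suc i \<le> j then length (p (Suc i)) else 0)"
proof -
  have l: "length (p i) \<le> dd j lm i" using PiE_len[OF pP i] .
  have d: "lx j lm (i+1) \<le> lm i" using dec_at[OF dec i] .
  show ?thesis
  proof (cases "i = j")
    case True
    then have "lx j lm (i+1) = 0" "lx j (\<lambda>i. lm i - int (length (p i))) (i+1) = 0" by (simp_all add: lx_def)
    then show ?thesis using l True natarith2[of "length (p j)" "lm j" 0] by (simp add: dd_def)
  next
    case False
    then have s: "Suc i \<le> j" using i by auto
    then have "lx j lm (i+1) = lm (i+1)" "lx j (\<lambda>i. lm i - int (length (p i))) (i+1) = lm (i+1) - int (length (p (i+1)))"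
      by (simp_all add: lx_def)
    then show ?thesis using l d s natarith[of "lm (i+1)" "lm i" "length (p i)" "length (p (i+1))"]
      by (simp add: dd_def)
  qed
qed

lemma dd_shiftB:
  assumes dec: "dec (Suc j) et" and qP: "q \<in> PiE {1..j} (\<lambda>i. PB (dd (Suc j) et i))" and i: "i \<in> {1..j}"
  shows "dd j (\<lambda>i. et i - int (length (q i))) i = (dd (Suc j) et i - length (q i)) + (if Suc i \<le> j then length (q (Suc i)) else dd (Suc j) et (Suc j))"
proof -
  have l: "length (q i) \<le> nat (et i - et (i+1))" using PiE_len[OF qP i] dd_Suc[OF i] by simp
  have d0: "lx (Suc j) et (i+1) \<le> et i" using dec_at[OF dec] i by auto
  then have d: "et (i+1) \<le> et i" using i by (simp add: lx_def)
  show ?thesis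
  proof (cases "i = j")
    case True
    have "lx (Suc j) et (Suc j + 1) \<le> et (Suc j)" using dec_at[OF dec, of "Suc j"] by simp
    then have e0: "0 \<le> et (Suc j)" by (simp add: lx_def)
    have "dd (Suc j) et (Suc j) = nat (et (Suc j) - 0)" by (simp add: dd_def lx_def)
    moreover have "lx j (\<lambda>i. et i - int (length (q i))) (i+1) = 0" using True by (simp add: lx_def)
    moreover have "lx (Suc j) et (Suc j) = et (Suc j)" by (simp add: lx_def)
    ultimately show ?thesis using True l d e0 natarith3[of "et (Suc j)" "et j" "length (q j)"] i
      by (simp add: dd_def)
  next
    case False
    then have s: "Suc i \<le> j" using i by auto
    then have "lx j (\<lambda>i. et i - int (length (q i))) (i+1) = et (i+1) - int (length (q (i+1)))"
      by (simp add: lx_def)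
    moreover have "lx (Suc j) et (i+1) = et (i+1)" using s by (simp add: lx_def)
    ultimately show ?thesis using l d s natarith[of "et (i+1)" "et i" "length (q i)" "length (q (i+1))"] i
      by (simp add: dd_def)
  qed
qed

lemma dec_etaA:
  assumes dec: "dec j lm" and pP: "p \<in> PiE {1..j} (\<lambda>i. PB (dd j lm i))"
  shows "dec j (\<lambda>i. lm i - int (length (p i)))"
  unfolding dec_def
proof
  fix i assume i: "i \<in> {1..j}"
  have l: "length (p i) \<le> dd j lm i" using PiE_len[OF pP i] .
  have d: "lx j lm (i+1) \<le> lm i" using dec_at[OF dec i] .
  show "lx j (\<lambda>i. lm i - int (length (p i))) (i+1) \<le> lm i - int (length (p i))"
  proof (cases "i = j")
    case True then show ?thesis using l d by (simp add: lx_def dd_def)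
  next
    case False
    then have "Suc i \<le> j" using i by auto
    then show ?thesis using l d by (simp add: lx_def dd_def)
  qed
qed

lemma dec_lamB:
  assumes dec: "dec (Suc j) et" and qP: "q \<in> PiE {1..j} (\<lambda>i. PB (dd (Suc j) et i))"
  shows "dec j (\<lambda>i. et i - int (length (q i)))"
  unfolding dec_def
proof
  fix i assume i: "i \<in> {1..j}"
  have l: "length (q i) \<le> nat (et i - et (i+1))" using PiE_len[OF qP i] dd_Suc[OF i] by simp
  have d0: "lx (Suc j) et (i+1) \<le> et i" using dec_at[OF dec] i by auto
  then have d: "et (i+1) \<le> et i" using i by (simp add: lx_def)
  show "lx j (\<lambda>i. et i - int (length (q i))) (i+1) \<le> et i - int (length (q i))"
  proof (cases "i = j")
    case True
    have "lx (Suc j) et (Suc j + 1) \<le> et (Suc j)" using dec_at[OF dec, of "Suc j"] by simp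
    then have e0: "0 \<le> et (Suc j)" by (simp add: lx_def)
    then show ?thesis using True l d by (simp add: lx_def)
  next
    case False
    then have "Suc i \<le> j" using i by auto
    then show ?thesis using l d by (simp add: lx_def)
  qed
qed



lemma stepA:
  assumes j: "j \<ge> 1"
    and IH: "\<And>et. dec j et \<Longrightarrow> finite (WB (j-1) et) \<and> int (card (WB (j-1) et)) = (\<Prod>i=1..j. Bj (j-1) i ^ dd j et i)"
    and dec: "dec j lm"
  shows "finite (WA j lm) \<and> int (card (WA j lm)) = (\<Prod>i=1..j. Aj j i ^ dd j lm i)"
proof -
  let ?P = "PiE {1..j} (\<lambda>i. PB (dd j lm i))"
  let ?eta = "\<lambda>p i. lm i - int (length (p i))"
  have finP: "finite ?P" by (intro finite_PiE) (auto simp: finite_PB)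
  have decp: "\<And>p. p \<in> ?P \<Longrightarrow> dec j (?eta p)" using dec_etaA[OF dec] by blast
  have inj: "p = p'" if pP: "p \<in> ?P" and pP': "p' \<in> ?P" and w: "w \<in> WB (j-1) (?eta p)"
    and w': "w' \<in> WB (j-1) (?eta p')" and e: "w @ Xbar (\<lambda>_. p) j = w' @ Xbar (\<lambda>_. p') j" for p p' w w'
  proof -
    have jj: "2 * Suc (j-1) = 2*j" using j by simp
    have lw: "\<forall>c\<in>set w. lv (fst c) < 2*j" using WB_lv[OF w] jj by auto
    have lw': "\<forall>c\<in>set w'. lv (fst c) < 2*j" using WB_lv[OF w'] jj by auto
    show "p = p'"
    proof (rule PiE_ext[OF pP pP'])
      fix i assume i: "i \<in> {1..j}"
      have "p i = map snd (filter (\<lambda>c. fst c = RBar i j) (w @ Xbar (\<lambda>_. p) j))"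
        using extract_bar[OF lw i, of "\<lambda>_. p"] by simp
      also have "\<dots> = map snd (filter (\<lambda>c. fst c = RBar i j) (w' @ Xbar (\<lambda>_. p') j))" using e by simp
      also have "\<dots> = p' i" using extract_bar[OF lw' i, of "\<lambda>_. p'"] by simp
      finally show "p i = p' i" .
    qed
  qed
  have finW: "\<And>p. p \<in> ?P \<Longrightarrow> finite (WB (j-1) (?eta p))" using IH decp by blast
  have U: "finite (\<Union>p\<in>?P. (\<lambda>w. w @ Xbar (\<lambda>_. p) j) ` WB (j-1) (?eta p)) \<and>
         card (\<Union>p\<in>?P. (\<lambda>w. w @ Xbar (\<lambda>_. p) j) ` WB (j-1) (?eta p)) = (\<Sum>p\<in>?P. card (WB (j-1) (?eta p)))"
    by (rule card_UN_app[OF finP finW inj])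
  have fin: "finite (WA j lm)" and c: "card (WA j lm) = (\<Sum>p\<in>?P. card (WB (j-1) (?eta p)))"
    using U recA[OF j dec] by simp_all
  have "int (card (WA j lm)) = (\<Sum>p\<in>?P. int (card (WB (j-1) (?eta p))))" using c by simp
  also have "\<dots> = (\<Sum>p\<in>?P. \<Prod>i=1..j. Bj (j-1) i ^ dd j (?eta p) i)"
    using IH decp by (intro sum.cong refl) blast
  also have "\<dots> = (\<Sum>p\<in>?P. \<Prod>i=1..j. Bj (j-1) i ^ (dd j lm i - length (p i)) * Bj (j-1) (i-1) ^ length (p i))"
  proof (intro sum.cong refl)
    fix p assume pP: "p \<in> ?P"
    let ?k = "\<lambda>i. if i \<le> j then length (p i) else 0"
    have "(\<Prod>i=1..j. Bj (j-1) i ^ dd j (?eta p) i) =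
          (\<Prod>i=1..j. Bj (j-1) i ^ (dd j lm i - ?k i) * Bj (j-1) (i-1) ^ ?k i) * Bj (j-1) j ^ ?k (Suc j)"
      by (rule prod_pow_shift) (auto simp: Bj0 dd_shiftA[OF dec pP])
    also have "(\<Prod>i=1..j. Bj (j-1) i ^ (dd j lm i - ?k i) * Bj (j-1) (i-1) ^ ?k i) =
       (\<Prod>i=1..j. Bj (j-1) i ^ (dd j lm i - length (p i)) * Bj (j-1) (i-1) ^ length (p i))"
      by (rule prod.cong) auto
    also have "\<dots> * Bj (j-1) j ^ ?k (Suc j) = (\<Prod>i=1..j. Bj (j-1) i ^ (dd j lm i - length (p i)) * Bj (j-1) (i-1) ^ length (p i))"
      by simp
    finally show "(\<Prod>i=1..j. Bj (j-1) i ^ dd j (?eta p) i) =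
          (\<Prod>i=1..j. Bj (j-1) i ^ (dd j lm i - length (p i)) * Bj (j-1) (i-1) ^ length (p i))" .
  qed
  also have "\<dots> = (\<Prod>i=1..j. (Bj (j-1) i + Bj (j-1) (i-1)) ^ dd j lm i)" by (rule key_sum)
  also have "\<dots> = (\<Prod>i=1..j. Aj j i ^ dd j lm i)" using A_from_B j by (intro prod.cong refl) auto
  finally show ?thesis using fin by simp
qed

lemma stepB:
  assumes j: "j \<ge> 1"
    and IH: "\<And>lm. dec j lm \<Longrightarrow> finite (WA j lm) \<and> int (card (WA j lm)) = (\<Prod>i=1..j. Aj j i ^ dd j lm i)"
    and dec: "dec (Suc j) et"
  shows "finite (WB j et) \<and> int (card (WB j et)) = (\<Prod>i=1..Suc j. Bj j i ^ dd (Suc j) et i)"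
proof -
  let ?Q = "PiE {1..j} (\<lambda>i. PB (dd (Suc j) et i))"
  let ?lam = "\<lambda>q i. et i - int (length (q i))"
  let ?D = "dd (Suc j) et"
  have finQ: "finite ?Q" by (intro finite_PiE) (auto simp: finite_PB)
  have decq: "\<And>q. q \<in> ?Q \<Longrightarrow> dec j (?lam q)" using dec_lamB[OF dec] by blast
  have inj: "q = q'" if qP: "q \<in> ?Q" and qP': "q' \<in> ?Q" and w: "w \<in> WA j (?lam q)"
    and w': "w' \<in> WA j (?lam q')" and e: "w @ Xpl (\<lambda>_. q) j = w' @ Xpl (\<lambda>_. q') j" for q q' w w'
  proof -
    have lw: "\<forall>c\<in>set w. lv (fst c) \<le> 2*j" using WA_lv[OF w] by auto
    have lw': "\<forall>c\<in>set w'. lv (fst c) \<le> 2*j" using WA_lv[OF w'] by auto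
    show "q = q'"
    proof (rule PiE_ext[OF qP qP'])
      fix i assume i: "i \<in> {1..j}"
      have "q i = map snd (filter (\<lambda>c. fst c = RPl i j) (w @ Xpl (\<lambda>_. q) j))"
        using extract_pl[OF lw i, of "\<lambda>_. q"] by simp
      also have "\<dots> = map snd (filter (\<lambda>c. fst c = RPl i j) (w' @ Xpl (\<lambda>_. q') j))" using e by simp
      also have "\<dots> = q' i" using extract_pl[OF lw' i, of "\<lambda>_. q'"] by simp
      finally show "q i = q' i" .
    qed
  qed
  have finW: "\<And>q. q \<in> ?Q \<Longrightarrow> finite (WA j (?lam q))" using IH decq by blast
  have U: "finite (\<Union>q\<in>?Q. (\<lambda>w. w @ Xpl (\<lambda>_. q) j) ` WA j (?lam q)) \<and>
         card (\<Union>q\<in>?Q. (\<lambda>w. w @ Xpl (\<lambda>_. q) j) ` WA j (?lam q)) = (\<Sum>q\<in>?Q. card (WA j (?lam q)))"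
    by (rule card_UN_app[OF finQ finW inj])
  have fin: "finite (WB j et)" and c: "card (WB j et) = (\<Sum>q\<in>?Q. card (WA j (?lam q)))"
    using U recB[OF j dec] by simp_all
  have "int (card (WB j et)) = (\<Sum>q\<in>?Q. int (card (WA j (?lam q))))" using c by simp
  also have "\<dots> = (\<Sum>q\<in>?Q. \<Prod>i=1..j. Aj j i ^ dd j (?lam q) i)"
    using IH decq by (intro sum.cong refl) blast
  also have "\<dots> = (\<Sum>q\<in>?Q. (\<Prod>i=1..j. Aj j i ^ (?D i - length (q i)) * Aj j (i-1) ^ length (q i)) * Aj j j ^ ?D (Suc j))"
  proof (intro sum.cong refl)
    fix q assume qP: "q \<in> ?Q"
    let ?k = "\<lambda>i. if i \<le> j then length (q i) else ?D (Suc j)"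
    have "(\<Prod>i=1..j. Aj j i ^ dd j (?lam q) i) =
          (\<Prod>i=1..j. Aj j i ^ (?D i - ?k i) * Aj j (i-1) ^ ?k i) * Aj j j ^ ?k (Suc j)"
      by (rule prod_pow_shift) (auto simp: Aj0 dd_shiftB[OF dec qP])
    also have "(\<Prod>i=1..j. Aj j i ^ (?D i - ?k i) * Aj j (i-1) ^ ?k i) =
       (\<Prod>i=1..j. Aj j i ^ (?D i - length (q i)) * Aj j (i-1) ^ length (q i))"
      by (rule prod.cong) auto
    also have "\<dots> * Aj j j ^ ?k (Suc j) = (\<Prod>i=1..j. Aj j i ^ (?D i - length (q i)) * Aj j (i-1) ^ length (q i)) * Aj j j ^ ?D (Suc j)"
      by simp
    finally show "(\<Prod>i=1..j. Aj j i ^ dd j (?lam q) i) =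
          (\<Prod>i=1..j. Aj j i ^ (?D i - length (q i)) * Aj j (i-1) ^ length (q i)) * Aj j j ^ ?D (Suc j)" .
  qed
  also have "\<dots> = (\<Sum>q\<in>?Q. \<Prod>i=1..j. Aj j i ^ (?D i - length (q i)) * Aj j (i-1) ^ length (q i)) * Aj j j ^ ?D (Suc j)"
    by (simp add: sum_distrib_right)
  also have "\<dots> = (\<Prod>i=1..j. (Aj j i + Aj j (i-1)) ^ ?D i) * Aj j j ^ ?D (Suc j)" by (simp only: key_sum)
  also have "\<dots> = (\<Prod>i=1..j. Bj j i ^ ?D i) * Bj j (Suc j) ^ ?D (Suc j)"
  proof -
    have "(\<Prod>i=1..j. (Aj j i + Aj j (i-1)) ^ ?D i) = (\<Prod>i=1..j. Bj j i ^ ?D i)"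
      by (rule prod.cong) (auto simp: B_from_A)
    then show ?thesis by (simp add: B_top)
  qed
  also have "\<dots> = (\<Prod>i=1..Suc j. Bj j i ^ ?D i)" by (simp add: prod.cl_ivl_Suc)
  finally show ?thesis using fin by simp
qed

lemma cardB: "dec (Suc j) et \<Longrightarrow> finite (WB j et) \<and> int (card (WB j et)) = (\<Prod>i=1..Suc j. Bj j i ^ dd (Suc j) et i)"
proof (induction j arbitrary: et)
  case 0
  then show ?case by (simp add: WB0 Bj_def binomz_def)
next
  case (Suc j)
  have A: "finite (WA (Suc j) lm) \<and> int (card (WA (Suc j) lm)) = (\<Prod>i=1..Suc j. Aj (Suc j) i ^ dd (Suc j) lm i)"
    if "dec (Suc j) lm" for lm
    by (rule stepA) (use Suc.IH that in auto)
  show ?case by (rule stepB[OF _ A Suc.prems]) simp_all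
qed

lemma cardA: "j \<ge> 1 \<Longrightarrow> dec j lm \<Longrightarrow> finite (WA j lm) \<and> int (card (WA j lm)) = (\<Prod>i=1..j. Aj j i ^ dd j lm i)"
  by (rule stepA) (use cardB[of "j-1"] in auto)



lemma bseq_step: "i \<le> r \<Longrightarrow> bseq r m i = int (m i) + bseq r m (Suc i)"
  unfolding bseq_def by (simp add: sum.atLeast_Suc_atMost)

lemma bseq_over: "bseq r m (Suc r) = 0"
  unfolding bseq_def by simp

lemma lx_bseq: "lx r (bseq r m) k = bseq r m k"
  by (simp add: lx_def bseq_over)

lemma dec_bseq: "dec r (bseq r m)"
  unfolding dec_def lx_bseq using bseq_step by force

lemma dd_bseq: "i \<in> {1..r} \<Longrightarrow> dd r (bseq r m) i = m i"
  unfolding dd_def lx_bseq using bseq_step[of i r m] by simp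

lemma POP_valid: "is_POP r bnd eta lam sb s \<longleftrightarrow> validA r bnd eta lam sb s"
  unfolding is_POP_def is_pattern_def validA_def
  by (auto simp: barOK_iff[symmetric] plOK_iff[symmetric])

lemma rPOP_valid: "r \<ge> 1 \<Longrightarrow> is_rPOP r bnd eta lam sb s \<longleftrightarrow> validB (r-1) bnd eta lam sb s"
proof -
  assume r: "r \<ge> 1"
  then have rr: "Suc (r - 1) = r" by simp
  have ii: "{1..<r} = {1..r-1}" using r by auto
  show ?thesis
    unfolding is_rPOP_def is_rpattern_def validB_def rr ii
    by (auto simp: barOK_iff[symmetric] plOK_iff[symmetric])
qed

lemma Bfull_eq: "Bfull r m = WA r (bseq r m)"
  unfolding Bfull_def WA_def wordFull_def POP_valid ..

lemma Bhalf_eq: "r \<ge> 1 \<Longrightarrow> Bhalf r n = WB (r-1) (bseq r n)"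
proof -
  assume r: "r \<ge> 1"
  then have rr: "Suc (r - 1) = r" by simp
  show ?thesis unfolding Bhalf_def WB_def rr rPOP_valid[OF r] ..
qed

theorem proposition3p2:
  fixes r :: nat and n m :: "nat \<Rightarrow> nat"
  assumes "r \<ge> 1"
  shows "int (card (Bhalf r n)) =
           (\<Prod>i=1..r. (binomz (2*r-1) (int i) - binomz (2*r-1) (int i - 2)) ^ n i) \<and>
         int (card (Bfull r m)) =
           (\<Prod>i=1..r. (binomz (2*r) (int i) - binomz (2*r) (int i - 2)) ^ m i)"
proof
  have rr: "Suc (r - 1) = r" using assms by simp
  have "int (card (Bhalf r n)) = (\<Prod>i=1..r. Bj (r-1) i ^ dd r (bseq r n) i)"
    using cardB[of "r-1" "bseq r n"] dec_bseq[of r n] unfolding rr Bhalf_eq[OF assms] by simp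
  also have "\<dots> = (\<Prod>i=1..r. (binomz (2*r-1) (int i) - binomz (2*r-1) (int i - 2)) ^ n i)"
  proof (rule prod.cong)
    fix i assume i: "i \<in> {1..r}"
    have "2 * (r - 1) + 1 = 2 * r - 1" using assms by simp
    then show "Bj (r-1) i ^ dd r (bseq r n) i = (binomz (2*r-1) (int i) - binomz (2*r-1) (int i - 2)) ^ n i"
      using dd_bseq[OF i] by (simp add: Bj_def)
  qed simp
  finally show "int (card (Bhalf r n)) =
           (\<Prod>i=1..r. (binomz (2*r-1) (int i) - binomz (2*r-1) (int i - 2)) ^ n i)" .
next
  have "int (card (Bfull r m)) = (\<Prod>i=1..r. Aj r i ^ dd r (bseq r m) i)"
    using cardA[OF assms dec_bseq[of r m]] unfolding Bfull_eq by simp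
  also have "\<dots> = (\<Prod>i=1..r. (binomz (2*r) (int i) - binomz (2*r) (int i - 2)) ^ m i)"
    by (rule prod.cong) (simp_all add: Aj_def dd_bseq)
  finally show "int (card (Bfull r m)) =
           (\<Prod>i=1..r. (binomz (2*r) (int i) - binomz (2*r) (int i - 2)) ^ m i)" .
qed

end
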